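(* Under the hypotheses that $S$ is a spray, $U\subset\mathcal TM$ is open, $C_u\notin\mathcal H_u$ for all $u\in U$ and $\mathcal H$ has constant rank on $U$: every first order formal solution of $P^2_F=(\mathcal L_CE-2E,\ P_{\mathfrak h}E)$ at a point $u\in U$ lifts to a second order formal solution, i.e. the projection $R_{2,u}(P^2_F)\to R_{1,u}(P^2_F)$ is surjective, where $R_{1,u}$ is the set of 1-jets $j_{1,u}E$ with $(P^2_FE)(u)=0$ and $R_{2,u}$ is the set of 2-jets $j_{2,u}E$ such that $P^2_FE$ and its first derivatives vanish at $u$.
   Context: Let $M$ be a smooth $n$-manifold, $\mathcal{T}M=TM\setminus\{0\}$, $(x^i,y^i)$ induced coordinates on $TM$. A spray is $S=y^i\frac{\partial}{\partial x^i}+f^i(x,y)\frac{\partial}{\partial y^i}$ on $\mathcal TM$ with $f^i$ positively homogeneous of degree 2 in $y$. Put $\Gamma^i_j=-\frac12\frac{\partial f^i}{\partial y^j}$; horizontal vector fields are spanned by $h_i=\frac{\partial}{\partial x^i}-\Gamma^\alpha_i\frac{\partial}{\partial y^\alpha}$. $C=y^i\frac{\partial}{\partial y^i}$. The holonomy distribution $\mathcal H$ has fibre $\mathcal H_u$ spanned by the values at $u$ of all local horizontal vector fields and all their iterated Lie brackets. $\mathfrak h$ is a vector bundle endomorphism of $T(TM)|_U$ with $\mathfrak h^2=\mathfrak h$ and image $\mathcal H$, and $P_{\mathfrak h}E$ is the 1-form $X\mapsto(\mathfrak hX)(E)$. *)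

theory Defs
  imports "HOL-Analysis.Analysis"
begin

text \<open>M is an open set X of R^n (a coordinate chart),
  TM = X x R^n with induced coordinates (x,y), and the slit tangent bundle is
  X x (R^n - {0}). Tangent vectors to TM are elements of R^n x R^n.\<close>

type_synonym 'n tp = "(real^'n) \<times> (real^('n::finite))"

definition pd :: "'a::real_normed_vector \<Rightarrow> ('a \<Rightarrow> 'b::real_normed_vector) \<Rightarrow> 'a \<Rightarrow> 'b" where
  "pd v g = (\<lambda>x. frechet_derivative g (at x) v)"

definition smooth_on :: "'a::euclidean_space set \<Rightarrow> ('a \<Rightarrow> 'b::real_normed_vector) \<Rightarrow> bool" where
  "smooth_on S g \<longleftrightarrow> (\<forall>vs. set vs \<subseteq> Basis \<longrightarrow> foldr pd vs g differentiable_on S)"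

definition slit_TM :: "(real^('n::finite)) set \<Rightarrow> ('n::finite) tp set" where
  "slit_TM X = X \<times> (UNIV - {0})"

text \<open>Spray S = y^i d/dx^i + f^i d/dy^i on the slit tangent bundle, f smooth and
  positively homogeneous of degree 2 in y.\<close>
definition is_spray :: "(real^('n::finite)) set \<Rightarrow> (('n::finite) tp \<Rightarrow> real^'n) \<Rightarrow> bool" where
  "is_spray X f \<longleftrightarrow> open X \<and> smooth_on (slit_TM X) f \<and>
     (\<forall>x\<in>X. \<forall>y. y \<noteq> 0 \<longrightarrow> (\<forall>c>0. f (x, c *\<^sub>R y) = c\<^sup>2 *\<^sub>R f (x, y)))"

text \<open>h_i = d/dx^i - Gamma^a_i d/dy^a with Gamma^a_i = -1/2 df^a/dy^i.\<close>
definition hfield :: "(('n::finite) tp \<Rightarrow> real^'n) \<Rightarrow> 'n \<Rightarrow> ('n::finite) tp \<Rightarrow> ('n::finite) tp" where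
  "hfield f i u = (axis i 1, (1/2) *\<^sub>R frechet_derivative f (at u) (0, axis i 1))"

definition liouville :: "('n::finite) tp \<Rightarrow> ('n::finite) tp" where
  "liouville u = (0, snd u)"

definition horizontal_field :: "(real^('n::finite)) set \<Rightarrow> (('n::finite) tp \<Rightarrow> real^'n) \<Rightarrow> ('n::finite) tp set \<Rightarrow> (('n::finite) tp \<Rightarrow> ('n::finite) tp) \<Rightarrow> bool" where
  "horizontal_field X f V Z \<longleftrightarrow> open V \<and> V \<subseteq> slit_TM X \<and>
     (\<exists>a :: 'n \<Rightarrow> ('n::finite) tp \<Rightarrow> real. (\<forall>i. smooth_on V (a i)) \<and>
        (\<forall>u\<in>V. Z u = (\<Sum>i\<in>UNIV. a i u *\<^sub>R hfield f i u)))"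

definition lie_bracket :: "('a::real_normed_vector \<Rightarrow> 'a) \<Rightarrow> ('a \<Rightarrow> 'a) \<Rightarrow> 'a \<Rightarrow> 'a" where
  "lie_bracket Z Y u = frechet_derivative Y (at u) (Z u) - frechet_derivative Z (at u) (Y u)"

inductive_set hol_fields :: "(real^('n::finite)) set \<Rightarrow> (('n::finite) tp \<Rightarrow> real^'n) \<Rightarrow> (('n::finite) tp set \<times> (('n::finite) tp \<Rightarrow> ('n::finite) tp)) set"
  for X f where
  base: "horizontal_field X f V Z \<Longrightarrow> (V, Z) \<in> hol_fields X f"
| bracket: "(V, Z) \<in> hol_fields X f \<Longrightarrow> (W, Y) \<in> hol_fields X f \<Longrightarrow>
            (V \<inter> W, lie_bracket Z Y) \<in> hol_fields X f"

definition holonomy :: "(real^('n::finite)) set \<Rightarrow> (('n::finite) tp \<Rightarrow> real^'n) \<Rightarrow> ('n::finite) tp \<Rightarrow> ('n::finite) tp set" where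
  "holonomy X f u = span {Z u | V Z. (V, Z) \<in> hol_fields X f \<and> u \<in> V}"

text \<open>The operator P^2_F E = (L_C E - 2E, P_h E). The first component is a
  function; the second is the 1-form X |-> (h X)(E), represented by its
  values on (constant) vectors v.\<close>
definition LC_minus_2 :: "(('n::finite) tp \<Rightarrow> real) \<Rightarrow> ('n::finite) tp \<Rightarrow> real" where
  "LC_minus_2 E u = frechet_derivative E (at u) (liouville u) - 2 * E u"

definition P_h :: "(('n::finite) tp \<Rightarrow> ('n::finite) tp \<Rightarrow> ('n::finite) tp) \<Rightarrow> (('n::finite) tp \<Rightarrow> real) \<Rightarrow> ('n::finite) tp \<Rightarrow> ('n::finite) tp \<Rightarrow> real" where
  "P_h hh E v u = frechet_derivative E (at u) (hh u v)"

text \<open>E represents a 1-jet in R_{1,u}(P^2_F): (P^2_F E)(u) = 0.\<close>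
definition first_order_sol :: "('n::finite) tp set \<Rightarrow> (('n::finite) tp \<Rightarrow> ('n::finite) tp \<Rightarrow> ('n::finite) tp) \<Rightarrow> ('n::finite) tp \<Rightarrow> (('n::finite) tp \<Rightarrow> real) \<Rightarrow> bool" where
  "first_order_sol U hh u E \<longleftrightarrow> smooth_on U E \<and>
     LC_minus_2 E u = 0 \<and> (\<forall>v. P_h hh E v u = 0)"

text \<open>E represents a 2-jet in R_{2,u}(P^2_F): P^2_F E and its first derivatives vanish at u.\<close>
definition second_order_sol :: "('n::finite) tp set \<Rightarrow> (('n::finite) tp \<Rightarrow> ('n::finite) tp \<Rightarrow> ('n::finite) tp) \<Rightarrow> ('n::finite) tp \<Rightarrow> (('n::finite) tp \<Rightarrow> real) \<Rightarrow> bool" where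
  "second_order_sol U hh u E \<longleftrightarrow> first_order_sol U hh u E \<and>
     frechet_derivative (LC_minus_2 E) (at u) = (\<lambda>_. 0) \<and>
     (\<forall>v. frechet_derivative (P_h hh E v) (at u) = (\<lambda>_. 0))"

end

theory Submission
  imports Defs
begin


lemma fd_local:
  assumes "open S" "x \<in> S" "\<And>y. y \<in> S \<Longrightarrow> g y = g' y"
  shows "frechet_derivative g (at x) = frechet_derivative g' (at x)"
proof -
  have "\<And>D. (g has_derivative D) (at x) \<longleftrightarrow> (g' has_derivative D) (at x)"
    using has_derivative_transform_within_open[OF _ assms(1,2)] assms(3) by metis
  then show ?thesis unfolding frechet_derivative_def by simp
qed

definition sm :: "nat \<Rightarrow> 'a::euclidean_space set \<Rightarrow> ('a \<Rightarrow> 'b::real_normed_vector) \<Rightarrow> bool" where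
  "sm n S g \<longleftrightarrow> (\<forall>vs. set vs \<subseteq> Basis \<and> length vs \<le> n \<longrightarrow> foldr pd vs g differentiable_on S)"

lemma smooth_on_sm: "smooth_on S g \<longleftrightarrow> (\<forall>n. sm n S g)"
  unfolding smooth_on_def sm_def by (meson le_refl)

lemma sm_0: "sm 0 S g \<longleftrightarrow> g differentiable_on S"
  unfolding sm_def by auto

lemma sm_Suc: "sm (Suc n) S g \<longleftrightarrow> g differentiable_on S \<and> (\<forall>b\<in>Basis. sm n S (pd b g))"
proof
  assume a: "sm (Suc n) S g"
  show "g differentiable_on S \<and> (\<forall>b\<in>Basis. sm n S (pd b g))"
  proof
    show "g differentiable_on S" using a[unfolded sm_def, rule_format, of "[]"] by simp
    show "\<forall>b\<in>Basis. sm n S (pd b g)"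
    proof (intro ballI, unfold sm_def, intro allI impI)
      fix b :: 'a and vs :: "'a list" assume "b \<in> Basis" "set vs \<subseteq> Basis \<and> length vs \<le> n"
      then show "foldr pd vs (pd b g) differentiable_on S"
        using a[unfolded sm_def, rule_format, of "vs @ [b]"] by simp
    qed
  qed
next
  assume a: "g differentiable_on S \<and> (\<forall>b\<in>Basis. sm n S (pd b g))"
  show "sm (Suc n) S g"
    unfolding sm_def
  proof (intro allI impI)
    fix vs :: "'a list" assume v: "set vs \<subseteq> Basis \<and> length vs \<le> Suc n"
    show "foldr pd vs g differentiable_on S"
    proof (cases vs rule: rev_cases)
      case Nil then show ?thesis using a by simp
    next
      case (snoc ws b)
      then show ?thesis using a v unfolding sm_def by auto
    qed
  qed
qed

lemma sm_mono: "sm n S g \<Longrightarrow> m \<le> n \<Longrightarrow> sm m S g"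
  unfolding sm_def by auto

lemma sm_subset: "sm n S g \<Longrightarrow> T \<subseteq> S \<Longrightarrow> sm n T g"
  unfolding sm_def using differentiable_on_subset by blast

lemma diff_on_open_at: "g differentiable_on S \<Longrightarrow> open S \<Longrightarrow> x \<in> S \<Longrightarrow> g differentiable (at x)"
  using differentiable_on_eq_differentiable_at by blast

lemma has_fd: "g differentiable_on S \<Longrightarrow> open S \<Longrightarrow> x \<in> S \<Longrightarrow> (g has_derivative frechet_derivative g (at x)) (at x)"
  using diff_on_open_at frechet_derivative_works by blast

lemma diff_on_cong:
  assumes "open S" "\<And>x. x \<in> S \<Longrightarrow> g x = g' x" "g differentiable_on S"
  shows "g' differentiable_on S"
  unfolding differentiable_on_eq_differentiable_at[OF assms(1)]
proof
  fix x assume x: "x \<in> S"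
  have "(g' has_derivative frechet_derivative g (at x)) (at x)"
    using has_derivative_transform_within_open[OF has_fd[OF assms(3,1) x] assms(1) x] assms(2) by blast
  then show "g' differentiable at x" unfolding differentiable_def by blast
qed

lemma sm_cong:
  assumes "open S" "\<And>x. x \<in> S \<Longrightarrow> g x = g' x" "sm n S g"
  shows "sm n S g'"
  using assms(2,3)
proof (induction n arbitrary: g g')
  case 0
  then show ?case unfolding sm_0 using diff_on_cong assms(1) by blast
next
  case (Suc n)
  have d: "g' differentiable_on S"
    using Suc.prems unfolding sm_Suc
    using diff_on_cong assms(1) by blast
  have "\<And>b. b \<in> Basis \<Longrightarrow> sm n S (pd b g')"
  proof -
    fix b :: 'a assume b: "b \<in> Basis"
    have "\<And>x. x \<in> S \<Longrightarrow> pd b g x = pd b g' x"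
      unfolding pd_def using fd_local[OF assms(1)] Suc.prems(1) by metis
    then show "sm n S (pd b g')" using Suc.IH Suc.prems(2) b unfolding sm_Suc by blast
  qed
  then show ?case using d sm_Suc by blast
qed

lemma sm_const: "sm n S (\<lambda>x. c)"
proof (induction n arbitrary: c)
  case 0 then show ?case unfolding sm_0 by simp
next
  case (Suc n)
  have e: "pd b (\<lambda>x. c) = (\<lambda>x. 0)" for b :: 'a unfolding pd_def by simp
  show ?case unfolding sm_Suc e using Suc.IH[of 0] by simp
qed

lemma sm_add:
  assumes "open S"
  shows "sm n S g \<Longrightarrow> sm n S h \<Longrightarrow> sm n S (\<lambda>x. g x + h x)"
proof (induction n arbitrary: g h)
  case 0 then show ?case unfolding sm_0 by (simp add: differentiable_on_add)
next
  case (Suc n)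
  have dg: "g differentiable_on S" and dh: "h differentiable_on S" using Suc.prems sm_Suc by blast+
  have "\<And>b. b \<in> Basis \<Longrightarrow> sm n S (pd b (\<lambda>x. g x + h x))"
  proof -
    fix b :: 'a assume b: "b \<in> Basis"
    have e: "\<And>x. x \<in> S \<Longrightarrow> pd b g x + pd b h x = pd b (\<lambda>x. g x + h x) x"
    proof -
      fix x assume x: "x \<in> S"
      have "((\<lambda>x. g x + h x) has_derivative (\<lambda>v. frechet_derivative g (at x) v + frechet_derivative h (at x) v)) (at x)"
        by (intro has_derivative_add has_fd[OF dg assms x] has_fd[OF dh assms x])
      then show "pd b g x + pd b h x = pd b (\<lambda>x. g x + h x) x"
        unfolding pd_def by (metis frechet_derivative_at)
    qed
    have pg: "sm n S (pd b g)" and ph: "sm n S (pd b h)" using Suc.prems b unfolding sm_Suc by blast+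
    show "sm n S (pd b (\<lambda>x. g x + h x))" using sm_cong[OF assms e Suc.IH[OF pg ph]] .
  qed
  then show ?case unfolding sm_Suc using dg dh by (simp add: differentiable_on_add)
qed

lemma diff_on_lin:
  assumes "open S" "bounded_linear T" "g differentiable_on S"
  shows "(\<lambda>x. T (g x)) differentiable_on S"
  unfolding differentiable_on_eq_differentiable_at[OF assms(1)] differentiable_def
  using bounded_linear.has_derivative[OF assms(2) has_fd[OF assms(3,1)]] by blast

lemma sm_lin:
  assumes "open S" "bounded_linear T"
  shows "sm n S g \<Longrightarrow> sm n S (\<lambda>x. T (g x))"
proof (induction n arbitrary: g)
  case 0 then show ?case unfolding sm_0 using diff_on_lin[OF assms] by blast
next
  case (Suc n)
  have dg: "g differentiable_on S" using Suc.prems sm_Suc by blast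
  have dT: "(\<lambda>x. T (g x)) differentiable_on S"
    using diff_on_lin[OF assms] dg by blast
  have "\<And>b. b \<in> Basis \<Longrightarrow> sm n S (pd b (\<lambda>x. T (g x)))"
  proof -
    fix b :: 'a assume b: "b \<in> Basis"
    have e: "\<And>x. x \<in> S \<Longrightarrow> T (pd b g x) = pd b (\<lambda>x. T (g x)) x"
    proof -
      fix x assume x: "x \<in> S"
      have "((\<lambda>x. T (g x)) has_derivative (\<lambda>v. T (frechet_derivative g (at x) v))) (at x)"
        by (rule bounded_linear.has_derivative[OF assms(2) has_fd[OF dg assms(1) x]])
      then show "T (pd b g x) = pd b (\<lambda>x. T (g x)) x"
        unfolding pd_def by (metis frechet_derivative_at)
    qed
    have pg: "sm n S (pd b g)" using Suc.prems b unfolding sm_Suc by blast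
    show "sm n S (pd b (\<lambda>x. T (g x)))" using sm_cong[OF assms(1) e Suc.IH[OF pg]] .
  qed
  then show ?case unfolding sm_Suc using dT by simp
qed

lemma sm_bil:
  assumes "open S" "bounded_bilinear P"
  shows "sm n S g \<Longrightarrow> sm n S h \<Longrightarrow> sm n S (\<lambda>x. P (g x) (h x))"
proof (induction n arbitrary: g h)
  case 0
  have dg: "g differentiable_on S" and dh: "h differentiable_on S" using 0 sm_0 by blast+
  have "\<And>x. x \<in> S \<Longrightarrow> (\<lambda>x. P (g x) (h x)) differentiable at x"
  proof -
    fix x assume x: "x \<in> S"
    show "(\<lambda>x. P (g x) (h x)) differentiable at x"
      using bounded_bilinear.FDERIV[OF assms(2) has_fd[OF dg assms(1) x] has_fd[OF dh assms(1) x]]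
      unfolding differentiable_def by blast
  qed
  then show ?case unfolding sm_0 using differentiable_on_eq_differentiable_at[OF assms(1)] by blast
next
  case (Suc n)
  have dg: "g differentiable_on S" and dh: "h differentiable_on S" using Suc.prems sm_Suc by blast+
  have hd: "((\<lambda>x. P (g x) (h x)) has_derivative
      (\<lambda>v. P (g x) (frechet_derivative h (at x) v) + P (frechet_derivative g (at x) v) (h x))) (at x)"
    if x: "x \<in> S" for x
    using bounded_bilinear.FDERIV[OF assms(2) has_fd[OF dg assms(1) x] has_fd[OF dh assms(1) x]] .
  have dP: "(\<lambda>x. P (g x) (h x)) differentiable_on S"
    using hd differentiable_on_eq_differentiable_at[OF assms(1)] unfolding differentiable_def by blast
  have gn: "sm n S g" and hn: "sm n S h" using Suc.prems sm_mono le_SucI order_refl by blast+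
  have "\<And>b. b \<in> Basis \<Longrightarrow> sm n S (pd b (\<lambda>x. P (g x) (h x)))"
  proof -
    fix b :: 'a assume b: "b \<in> Basis"
    have e: "\<And>x. x \<in> S \<Longrightarrow> P (g x) (pd b h x) + P (pd b g x) (h x) = pd b (\<lambda>x. P (g x) (h x)) x"
    proof -
      fix x assume x: "x \<in> S"
      show "P (g x) (pd b h x) + P (pd b g x) (h x) = pd b (\<lambda>x. P (g x) (h x)) x"
        unfolding pd_def using fun_cong[OF frechet_derivative_at[OF hd[OF x]], of b] by simp
    qed
    have pg: "sm n S (pd b g)" and ph: "sm n S (pd b h)" using Suc.prems b unfolding sm_Suc by blast+
    have s: "sm n S (\<lambda>x. P (g x) (pd b h x) + P (pd b g x) (h x))"
      by (rule sm_add[OF assms(1) Suc.IH[OF gn ph] Suc.IH[OF pg hn]])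
    show "sm n S (pd b (\<lambda>x. P (g x) (h x)))" by (rule sm_cong[OF assms(1) _ s]) (rule e)
  qed
  then show ?case unfolding sm_Suc using dP by simp
qed

lemma sm_sum:
  assumes "open S" "finite I"
  shows "(\<And>i. i \<in> I \<Longrightarrow> sm n S (g i)) \<Longrightarrow> sm n S (\<lambda>x. \<Sum>i\<in>I. g i x)"
  using assms(2)
proof (induction I rule: finite_induct)
  case empty then show ?case using sm_const by simp
next
  case (insert i I)
  then show ?case by (simp, intro sm_add[OF assms(1)]) auto
qed

lemma lin_expand:
  fixes D :: "'a::euclidean_space \<Rightarrow> 'b::real_vector"
  assumes "linear D"
  shows "D v = (\<Sum>b\<in>Basis. (v \<bullet> b) *\<^sub>R D b)"
proof -
  have "D v = D (\<Sum>b\<in>Basis. (v \<bullet> b) *\<^sub>R b)" by (simp add: euclidean_representation)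
  also have "\<dots> = (\<Sum>b\<in>Basis. (v \<bullet> b) *\<^sub>R D b)"
    by (simp add: linear_sum[OF assms] linear_scale[OF assms] o_def)
  finally show ?thesis .
qed

lemma open_vimage_lin: "open S \<Longrightarrow> bounded_linear d \<Longrightarrow> open (d -` S)"
  by (simp add: continuous_open_vimage linear_continuous_at)

lemma has_fd_comp:
  assumes "open S" "bounded_linear d" "g differentiable_on S" "d x \<in> S"
  shows "((\<lambda>x. g (d x)) has_derivative (\<lambda>v. frechet_derivative g (at (d x)) (d v))) (at x)"
  using diff_chain_at[OF bounded_linear_imp_has_derivative[OF assms(2)] has_fd[OF assms(3,1,4)]]
  by (simp add: o_def)

lemma sm_comp:
  fixes d :: "'c::euclidean_space \<Rightarrow> 'a::euclidean_space" and g :: "'a \<Rightarrow> 'b::real_normed_vector"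
  assumes "open S" "bounded_linear d"
  shows "sm n S g \<Longrightarrow> sm n (d -` S) (\<lambda>x. g (d x))"
proof (induction n arbitrary: g)
  case 0
  then show ?case unfolding sm_0
    differentiable_on_eq_differentiable_at[OF open_vimage_lin[OF assms]] differentiable_def
    using has_fd_comp[OF assms] by blast
next
  case (Suc n)
  have dg: "g differentiable_on S" using Suc.prems sm_Suc by blast
  have dc: "(\<lambda>x. g (d x)) differentiable_on (d -` S)"
    unfolding differentiable_on_eq_differentiable_at[OF open_vimage_lin[OF assms]] differentiable_def
    using has_fd_comp[OF assms dg] by blast
  have "\<And>b. b \<in> Basis \<Longrightarrow> sm n (d -` S) (pd b (\<lambda>x. g (d x)))"
  proof -
    fix b :: 'c assume b: "b \<in> Basis"
    have e: "(\<Sum>b'\<in>Basis. (d b \<bullet> b') *\<^sub>R pd b' g (d x)) = pd b (\<lambda>x. g (d x)) x"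
      if x: "x \<in> d -` S" for x
    proof -
      have "pd b (\<lambda>x. g (d x)) x = frechet_derivative g (at (d x)) (d b)"
        unfolding pd_def using fun_cong[OF frechet_derivative_at[OF has_fd_comp[OF assms dg]], of x b] x by simp
      also have "\<dots> = (\<Sum>b'\<in>Basis. (d b \<bullet> b') *\<^sub>R pd b' g (d x))"
        unfolding pd_def
        by (rule lin_expand, rule linear_frechet_derivative, rule diff_on_open_at[OF dg assms(1)]) (use x in simp)
      finally show ?thesis by simp
    qed
    have s: "sm n (d -` S) (\<lambda>x. \<Sum>b'\<in>Basis. (d b \<bullet> b') *\<^sub>R pd b' g (d x))"
    proof (rule sm_sum[OF open_vimage_lin[OF assms]], simp)
      fix b' :: 'a assume "b' \<in> Basis"
      then have "sm n S (pd b' g)" using Suc.prems unfolding sm_Suc by blast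
      then show "sm n (d -` S) (\<lambda>x. (d b \<bullet> b') *\<^sub>R pd b' g (d x))"
        by (intro sm_lin[OF open_vimage_lin[OF assms] bounded_linear_scaleR_right] Suc.IH)
    qed
    show "sm n (d -` S) (pd b (\<lambda>x. g (d x)))" by (rule sm_cong[OF open_vimage_lin[OF assms] _ s]) (rule e)
  qed
  then show ?case unfolding sm_Suc using dc by simp
qed

lemma sm_diff:
  assumes "open S" "sm n S g" "sm n S h"
  shows "sm n S (\<lambda>x. g x - h x)"
proof -
  have "sm n S (\<lambda>x. (-1::real) *\<^sub>R h x)" by (rule sm_lin[OF assms(1) bounded_linear_scaleR_right assms(3)])
  from sm_add[OF assms(1) assms(2) this] show ?thesis by simp
qed

lemma open_slit: "open X \<Longrightarrow> open (slit_TM X)"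
  unfolding slit_TM_def by (intro open_Times) auto

lemma basis_0axis: "((0::real^'n::finite), axis i (1::real)) \<in> (Basis :: 'n tp set)"
  by (auto simp: Basis_prod_def)

lemma fd_pd: "frechet_derivative g (at x) v = pd v g x"
  unfolding pd_def by simp

lemma hfield_pd: "hfield f i u = (axis i 1, (1/2) *\<^sub>R pd (0, axis i 1) f u)"
  unfolding hfield_def pd_def by simp

lemma sm_hfield:
  assumes "is_spray X f"
  shows "sm n (slit_TM X) (hfield f i)"
proof -
  have o: "open (slit_TM X)" using assms open_slit unfolding is_spray_def by blast
  have "sm (Suc n) (slit_TM X) f" using assms unfolding is_spray_def smooth_on_sm by blast
  then have p: "sm n (slit_TM X) (pd (0, axis i 1) f)" unfolding sm_Suc using basis_0axis by blast
  have bl: "bounded_linear (\<lambda>w::real^'a. ((0::real^'a), (1/2::real) *\<^sub>R w))"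
    by (intro bounded_linear_Pair bounded_linear_zero bounded_linear_scaleR_right bounded_linear_ident)
  have eq: "hfield f i = (\<lambda>u. (axis i 1, 0) + (0, (1/2::real) *\<^sub>R pd (0, axis i 1) f u))"
    by (rule ext) (simp add: hfield_pd)
  show ?thesis unfolding eq by (rule sm_add[OF o sm_const sm_lin[OF o bl p]])
qed

lemma lie_expand:
  assumes "Z differentiable at u" "Y differentiable at u"
  shows "lie_bracket Z Y u = (\<Sum>b\<in>Basis. (Z u \<bullet> b) *\<^sub>R pd b Y u) - (\<Sum>b\<in>Basis. (Y u \<bullet> b) *\<^sub>R pd b Z u)"
  unfolding lie_bracket_def
  using lin_expand[OF linear_frechet_derivative[OF assms(2)], of "Z u"]
    lin_expand[OF linear_frechet_derivative[OF assms(1)], of "Y u"]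
  by (simp add: fd_pd)

lemma hol_smooth:
  assumes sp: "is_spray X f"
  shows "(V, Z) \<in> hol_fields X f \<Longrightarrow> open V \<and> V \<subseteq> slit_TM X \<and> smooth_on V Z"
proof (induction rule: hol_fields.induct)
  case (base V Z)
  then obtain a where o: "open V" and sub: "V \<subseteq> slit_TM X" and a: "\<And>i. smooth_on V (a i)"
    and Z: "\<And>u. u \<in> V \<Longrightarrow> Z u = (\<Sum>i\<in>UNIV. a i u *\<^sub>R hfield f i u)"
    unfolding horizontal_field_def by blast
  have an: "\<And>i n. sm n V (a i)" using a smooth_on_sm by blast
  have "sm n V Z" for n
  proof -
    have "sm n V (\<lambda>u. \<Sum>i\<in>UNIV. a i u *\<^sub>R hfield f i u)"
    proof (rule sm_sum[OF o], simp)
      fix i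
      show "sm n V (\<lambda>u. a i u *\<^sub>R hfield f i u)"
        by (rule sm_bil[OF o bounded_bilinear_scaleR an sm_subset[OF sm_hfield[OF sp] sub]])
    qed
    then show ?thesis by (rule sm_cong[OF o, rotated]) (simp add: Z)
  qed
  then show ?case using o sub smooth_on_sm by blast
next
  case (bracket V Z W Y)
  have o: "open (V \<inter> W)" using bracket by blast
  have sZ: "\<And>n. sm n (V \<inter> W) Z" and sY: "\<And>n. sm n (V \<inter> W) Y"
    using bracket smooth_on_sm sm_subset by (metis inf_le1 inf_le2)+
  have "sm n (V \<inter> W) (lie_bracket Z Y)" for n
  proof -
    have dZ: "Z differentiable_on (V \<inter> W)" and dY: "Y differentiable_on (V \<inter> W)"
      using sZ sY sm_0 by blast+
    have s: "sm n (V \<inter> W) (\<lambda>u. (\<Sum>b\<in>Basis. (Z u \<bullet> b) *\<^sub>R pd b Y u) - (\<Sum>b\<in>Basis. (Y u \<bullet> b) *\<^sub>R pd b Z u))"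
    proof (intro sm_diff[OF o] sm_sum[OF o] finite_Basis sm_bil[OF o bounded_bilinear_scaleR])
      fix b :: "'a tp" assume b: "b \<in> Basis"
      show "sm n (V \<inter> W) (\<lambda>x. Z x \<bullet> b)" by (rule sm_lin[OF o bounded_linear_inner_left sZ])
      show "sm n (V \<inter> W) (\<lambda>x. Y x \<bullet> b)" by (rule sm_lin[OF o bounded_linear_inner_left sY])
      show "sm n (V \<inter> W) (pd b Y)" using sY[of "Suc n"] b unfolding sm_Suc by blast
      show "sm n (V \<inter> W) (pd b Z)" using sZ[of "Suc n"] b unfolding sm_Suc by blast
    qed
    show ?thesis
      by (rule sm_cong[OF o _ s]) (simp add: lie_expand diff_on_open_at[OF dZ o] diff_on_open_at[OF dY o])
  qed
  then show ?case using o bracket smooth_on_sm by blast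
qed

definition dil :: "real \<Rightarrow> 'n tp \<Rightarrow> ('n::finite) tp" where
  "dil c p = (fst p, c *\<^sub>R snd p)"

lemma bl_dil: "bounded_linear (dil c)"
  unfolding dil_def
  by (intro bounded_linear_Pair bounded_linear_fst bounded_linear_compose[OF bounded_linear_scaleR_right bounded_linear_snd])

lemma lin_dil: "linear (dil c)"
  using bl_dil bounded_linear.linear by blast

lemma dil_inv1: "c \<noteq> 0 \<Longrightarrow> dil c (dil (inverse c) w) = w"
  unfolding dil_def by simp

lemma dil_inv2: "c \<noteq> 0 \<Longrightarrow> dil (inverse c) (dil c w) = w"
  unfolding dil_def by simp

lemma dil_slit: "c > 0 \<Longrightarrow> dil c p \<in> slit_TM X \<longleftrightarrow> p \<in> slit_TM X"
  unfolding dil_def slit_TM_def by (cases p) auto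

lemma hfield_hom:
  assumes sp: "is_spray X f" and p: "p \<in> slit_TM X" and c: "c > 0"
  shows "hfield f i (dil c p) = dil c (hfield f i p)"
proof -
  have o: "open (slit_TM X)" using sp open_slit unfolding is_spray_def by blast
  have df: "f differentiable_on slit_TM X" using sp sm_0 unfolding is_spray_def smooth_on_sm by blast
  have dp: "dil c p \<in> slit_TM X" using dil_slit c p by blast
  have h1: "((\<lambda>q. f (dil c q)) has_derivative (\<lambda>v. frechet_derivative f (at (dil c p)) (dil c v))) (at p)"
    by (rule has_fd_comp[OF o bl_dil df dp])
  have hom: "c\<^sup>2 *\<^sub>R f q = f (dil c q)" if q: "q \<in> slit_TM X" for q
    using sp q c unfolding is_spray_def slit_TM_def dil_def by (cases q) auto
  have h2: "((\<lambda>q. f (dil c q)) has_derivative (\<lambda>v. c\<^sup>2 *\<^sub>R frechet_derivative f (at p) v)) (at p)"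
    by (rule has_derivative_transform_within_open[OF
          bounded_linear.has_derivative[OF bounded_linear_scaleR_right has_fd[OF df o p]] o p hom])
  have e: "frechet_derivative f (at (dil c p)) (dil c v) = c\<^sup>2 *\<^sub>R frechet_derivative f (at p) v" for v
    using has_derivative_unique[OF h1 h2] by metis
  define v :: "'a tp" where "v = (0, axis i 1)"
  have dv: "dil c v = c *\<^sub>R v" unfolding v_def dil_def by simp
  have lin: "linear (frechet_derivative f (at (dil c p)))"
    by (rule linear_frechet_derivative, rule diff_on_open_at[OF df o dp])
  have "c *\<^sub>R frechet_derivative f (at (dil c p)) v = c *\<^sub>R (c *\<^sub>R frechet_derivative f (at p) v)"
    using e[of v] unfolding dv linear_scale[OF lin] by (simp add: power2_eq_square)
  then have "frechet_derivative f (at (dil c p)) v = c *\<^sub>R frechet_derivative f (at p) v"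
    using c scaleR_cancel_left by (metis order_less_irrefl)
  then show ?thesis unfolding hfield_def dil_def v_def by simp
qed

lemma pull_fd:
  assumes o: "open V" and d: "Y differentiable_on V" and p: "dil c p \<in> V"
  shows "frechet_derivative (\<lambda>p. dil (inverse c) (Y (dil c p))) (at p)
        = (\<lambda>w. dil (inverse c) (frechet_derivative Y (at (dil c p)) (dil c w)))"
  by (rule frechet_derivative_at[symmetric],
      rule bounded_linear.has_derivative[OF bl_dil has_fd_comp[OF o bl_dil d p]])

lemma pull_fd2:
  assumes o: "open V" and d: "Y differentiable_on V" and p: "dil c p \<in> V"
    and eq: "\<forall>p\<in>dil c -` V. Y1 p = dil (inverse c) (Y (dil c p))"
  shows "frechet_derivative Y1 (at p)
        = (\<lambda>w. dil (inverse c) (frechet_derivative Y (at (dil c p)) (dil c w)))"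
proof -
  have "frechet_derivative Y1 (at p) = frechet_derivative (\<lambda>p. dil (inverse c) (Y (dil c p))) (at p)"
    by (rule fd_local[OF open_vimage_lin[OF o bl_dil]]) (use p eq in auto)
  then show ?thesis using pull_fd[OF o d p] by simp
qed

lemma hol_pull:
  assumes sp: "is_spray X f" and c: "c > 0"
  shows "(V, Z) \<in> hol_fields X f \<Longrightarrow> \<exists>Z'. (dil c -` V, Z') \<in> hol_fields X f \<and>
            (\<forall>p \<in> dil c -` V. Z' p = dil (inverse c) (Z (dil c p)))"
proof (induction rule: hol_fields.induct)
  case (base V Z)
  then obtain a where o: "open V" and sub: "V \<subseteq> slit_TM X" and a: "\<And>i. smooth_on V (a i)"
    and Z: "\<And>u. u \<in> V \<Longrightarrow> Z u = (\<Sum>i\<in>UNIV. a i u *\<^sub>R hfield f i u)"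
    unfolding horizontal_field_def by blast
  define Z' where "Z' = (\<lambda>p. \<Sum>i\<in>UNIV. a i (dil c p) *\<^sub>R hfield f i p)"
  have hf: "horizontal_field X f (dil c -` V) Z'"
    unfolding horizontal_field_def
  proof (intro conjI)
    show "open (dil c -` V)" by (rule open_vimage_lin[OF o bl_dil])
    show "dil c -` V \<subseteq> slit_TM X" using sub dil_slit[OF c] by blast
    have "smooth_on (dil c -` V) (\<lambda>p. a i (dil c p))" for i
      using sm_comp[OF o bl_dil] a unfolding smooth_on_sm by blast
    then show "\<exists>a. (\<forall>i. smooth_on (dil c -` V) (a i)) \<and> (\<forall>u\<in>dil c -` V. Z' u = (\<Sum>i\<in>UNIV. a i u *\<^sub>R hfield f i u))"
      by (intro exI[of _ "\<lambda>i p. a i (dil c p)"]) (simp add: Z'_def)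
  qed
  have "Z' p = dil (inverse c) (Z (dil c p))" if p: "p \<in> dil c -` V" for p
  proof -
    have ps: "p \<in> slit_TM X" using p sub dil_slit[OF c] by blast
    have "dil (inverse c) (Z (dil c p)) = dil (inverse c) (\<Sum>i\<in>UNIV. a i (dil c p) *\<^sub>R dil c (hfield f i p))"
      using p Z hfield_hom[OF sp ps c] by simp
    also have "\<dots> = (\<Sum>i\<in>UNIV. a i (dil c p) *\<^sub>R hfield f i p)"
      using c by (simp add: linear_sum[OF lin_dil] linear_scale[OF lin_dil] dil_inv2 o_def)
    finally show ?thesis unfolding Z'_def by simp
  qed
  then show ?case using hol_fields.base[OF hf] by blast
next
  case (bracket V Z W Y)
  obtain Z1 where Z1: "(dil c -` V, Z1) \<in> hol_fields X f" "\<forall>p\<in>dil c -` V. Z1 p = dil (inverse c) (Z (dil c p))"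
    using bracket.IH(1) by blast
  obtain Y1 where Y1: "(dil c -` W, Y1) \<in> hol_fields X f" "\<forall>p\<in>dil c -` W. Y1 p = dil (inverse c) (Y (dil c p))"
    using bracket.IH(2) by blast
  have oV: "open V" and dZ: "Z differentiable_on V"
    using hol_smooth[OF sp bracket.hyps(1)] sm_0 unfolding smooth_on_sm by blast+
  have oW: "open W" and dY: "Y differentiable_on W"
    using hol_smooth[OF sp bracket.hyps(2)] sm_0 unfolding smooth_on_sm by blast+
  have mem: "(dil c -` (V \<inter> W), lie_bracket Z1 Y1) \<in> hol_fields X f"
    using hol_fields.bracket[OF Z1(1) Y1(1)] by (simp add: vimage_Int)
  have "lie_bracket Z1 Y1 p = dil (inverse c) (lie_bracket Z Y (dil c p))" if p: "p \<in> dil c -` (V \<inter> W)" for p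
  proof -
    have pV: "dil c p \<in> V" and pW: "dil c p \<in> W" using p by auto
    have c0: "c \<noteq> 0" using c by simp
    show ?thesis
      unfolding lie_bracket_def pull_fd2[OF oV dZ pV Z1(2)] pull_fd2[OF oW dY pW Y1(2)]
      using Z1(2) Y1(2) pV pW by (simp add: dil_inv1[OF c0] linear_diff[OF lin_dil])
  qed
  then show ?case using mem by blast
qed

lemma hol_in: "(V, Z) \<in> hol_fields X f \<Longrightarrow> u \<in> V \<Longrightarrow> Z u \<in> holonomy X f u"
  unfolding holonomy_def by (rule span_base) blast

lemma C_cond:
  assumes sp: "is_spray X f" and hol: "(V, Z) \<in> hol_fields X f" and uV: "u \<in> V"
    and L: "linear L" and L0: "\<forall>h\<in>holonomy X f u. L h = (0::real)"
  shows "L (frechet_derivative Z (at u) (liouville u)) = L (0, snd (Z u))"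
proof -
  have oV: "open V" and dZ: "Z differentiable_on V"
    using hol_smooth[OF sp hol] sm_0 unfolding smooth_on_sm by blast+
  have blL: "bounded_linear L" using L linear_conv_bounded_linear by blast
  define DZ where "DZ = frechet_derivative Z (at u)"
  have d1: "dil 1 u = u" unfolding dil_def by simp
  have hg: "((\<lambda>c. dil c u) has_derivative (\<lambda>t. (0, t *\<^sub>R snd u))) (at 1)"
    unfolding dil_def
    by (rule has_derivative_Pair[OF has_derivative_const bounded_linear_imp_has_derivative[OF bounded_linear_scaleR_left]])
  have hZ: "(Z has_derivative DZ) (at (dil 1 u))" unfolding d1 DZ_def by (rule has_fd[OF dZ oV uV])
  have hG: "((\<lambda>c. Z (dil c u)) has_derivative (\<lambda>t. DZ (0, t *\<^sub>R snd u))) (at 1)"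
    using diff_chain_at[OF hg hZ] by (simp add: o_def)
  have hchi: "((\<lambda>c. (c *\<^sub>R fst (Z (dil c u)), snd (Z (dil c u)))) has_derivative
      (\<lambda>t. (1 *\<^sub>R fst (DZ (0, t *\<^sub>R snd u)) + t *\<^sub>R fst (Z (dil 1 u)), snd (DZ (0, t *\<^sub>R snd u))))) (at 1)"
    by (rule has_derivative_Pair[OF has_derivative_scaleR[OF has_derivative_ident has_derivative_fst[OF hG]] has_derivative_snd[OF hG]])
  have h1: "((\<lambda>c. L (c *\<^sub>R fst (Z (dil c u)), snd (Z (dil c u)))) has_derivative
      (\<lambda>t. L (1 *\<^sub>R fst (DZ (0, t *\<^sub>R snd u)) + t *\<^sub>R fst (Z (dil 1 u)), snd (DZ (0, t *\<^sub>R snd u))))) (at 1)"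
    by (rule bounded_linear.has_derivative[OF blL hchi])
  define Oc where "Oc = {0<..} \<inter> (\<lambda>c. dil c u) -` V"
  have oO: "open Oc" unfolding Oc_def
    by (intro open_Int open_greaterThan continuous_open_vimage[OF oV]) (simp add: dil_def continuous_intros)
  have 1: "(1::real) \<in> Oc" unfolding Oc_def using d1 uV by simp
  have z: "0 = L (c *\<^sub>R fst (Z (dil c u)), snd (Z (dil c u)))" if cO: "c \<in> Oc" for c
  proof -
    have c: "c > 0" and cV: "dil c u \<in> V" using cO unfolding Oc_def by auto
    obtain Z' where Z': "(dil c -` V, Z') \<in> hol_fields X f" "\<forall>p\<in>dil c -` V. Z' p = dil (inverse c) (Z (dil c p))"
      using hol_pull[OF sp c hol] by blast
    have "Z' u \<in> holonomy X f u" using hol_in[OF Z'(1)] cV by simp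
    then have "c *\<^sub>R Z' u \<in> holonomy X f u" unfolding holonomy_def by (rule span_mul)
    moreover have "c *\<^sub>R Z' u = (c *\<^sub>R fst (Z (dil c u)), snd (Z (dil c u)))"
      using Z'(2) cV c by (simp add: dil_def)
    ultimately show ?thesis using L0 by simp
  qed
  have h2: "((\<lambda>c. L (c *\<^sub>R fst (Z (dil c u)), snd (Z (dil c u)))) has_derivative (\<lambda>t. 0)) (at 1)"
    by (rule has_derivative_transform_within_open[OF has_derivative_const oO 1 z])
  have "L (1 *\<^sub>R fst (DZ (0, 1 *\<^sub>R snd u)) + 1 *\<^sub>R fst (Z (dil 1 u)), snd (DZ (0, 1 *\<^sub>R snd u))) = 0"
    using fun_cong[OF has_derivative_unique[OF h1 h2], of 1] by simp
  moreover have "DZ (0, snd u) + Z u - (0, snd (Z u)) = (fst (DZ (0, snd u)) + fst (Z u), snd (DZ (0, snd u)))"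
    by (simp add: prod_eq_iff)
  ultimately have e: "L (DZ (liouville u) + Z u - (0, snd (Z u))) = 0"
    unfolding d1 liouville_def by simp
  have "L (Z u) = 0" using L0 hol_in[OF hol uV] by blast
  then show ?thesis using e unfolding DZ_def linear_diff[OF L] linear_add[OF L] by simp
qed





definition Aop :: "('n tp \<Rightarrow> 'n tp \<Rightarrow> 'n tp) \<Rightarrow> 'n tp \<Rightarrow> 'n tp \<Rightarrow> 'n tp \<Rightarrow> ('n::finite) tp" where
  "Aop hh u w v = (\<Sum>b\<in>Basis. (v \<bullet> b) *\<^sub>R frechet_derivative (\<lambda>p. hh p b) (at u) w)"

lemma hh_hasd:
  assumes oU: "open U" and sm: "\<forall>v. smooth_on U (\<lambda>p. hh p v)" and u: "u \<in> U"
  shows "((\<lambda>p. hh p b) has_derivative frechet_derivative (\<lambda>p. hh p b) (at u)) (at u)"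
proof -
  have "sm 0 U (\<lambda>p. hh p b)" using sm unfolding smooth_on_sm by blast
  then have "(\<lambda>p. hh p b) differentiable_on U" unfolding sm_0 .
  then show ?thesis by (rule has_fd[OF _ oU u])
qed

lemma Dhh:
  assumes oU: "open U" and lin: "\<forall>p\<in>U. linear (hh p)" and sm: "\<forall>v. smooth_on U (\<lambda>p. hh p v)"
    and u: "u \<in> U" and hY: "(Y has_derivative DY) (at u)"
  shows "((\<lambda>p. hh p (Y p)) has_derivative (\<lambda>w. hh u (DY w) + Aop hh u w (Y u))) (at u)"
proof -
  define K where "K = (\<lambda>p. \<Sum>b\<in>(Basis::'a tp set). (Y p \<bullet> b) *\<^sub>R hh p b)"
  have hK: "(K has_derivative (\<lambda>w. \<Sum>b\<in>Basis. (Y u \<bullet> b) *\<^sub>R frechet_derivative (\<lambda>p. hh p b) (at u) w + (DY w \<bullet> b) *\<^sub>R hh u b)) (at u)"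
    unfolding K_def
    by (intro has_derivative_sum has_derivative_scaleR[OF bounded_linear.has_derivative[OF bounded_linear_inner_left hY] hh_hasd[OF oU sm u]])
  have eq: "(\<lambda>w. \<Sum>b\<in>Basis. (Y u \<bullet> b) *\<^sub>R frechet_derivative (\<lambda>p. hh p b) (at u) w + (DY w \<bullet> b) *\<^sub>R hh u b)
      = (\<lambda>w. hh u (DY w) + Aop hh u w (Y u))"
  proof (rule ext)
    fix w
    have lu: "linear (hh u)" using lin u by blast
    have "hh u (DY w) = (\<Sum>b\<in>Basis. (DY w \<bullet> b) *\<^sub>R hh u b)" by (rule lin_expand[OF lu])
    then show "(\<Sum>b\<in>Basis. (Y u \<bullet> b) *\<^sub>R frechet_derivative (\<lambda>p. hh p b) (at u) w + (DY w \<bullet> b) *\<^sub>R hh u b)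
      = hh u (DY w) + Aop hh u w (Y u)"
      unfolding Aop_def by (simp only: sum.distrib add.commute)
  qed
  have "K p = hh p (Y p)" if "p \<in> U" for p
  proof -
    have lp: "linear (hh p)" using lin that by blast
    have "hh p (Y p) = (\<Sum>b\<in>Basis. (Y p \<bullet> b) *\<^sub>R hh p b)" by (rule lin_expand[OF lp])
    then show ?thesis unfolding K_def by simp
  qed
  then show ?thesis by (rule has_derivative_transform_within_open[OF hK[unfolded eq] oU u])
qed

lemma star:
  assumes oU: "open U" and lin: "\<forall>p\<in>U. linear (hh p)" and sm: "\<forall>v. smooth_on U (\<lambda>p. hh p v)"
    and idem: "\<forall>p\<in>U. hh p \<circ> hh p = hh p" and img: "\<forall>p\<in>U. range (hh p) = holonomy X f p"
    and u: "u \<in> U" and L: "linear L" and L0: "\<forall>h\<in>holonomy X f u. L h = (0::real)"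
    and hY: "(Y has_derivative DY) (at u)" and oN: "open N" and uN: "u \<in> N" and NU: "N \<subseteq> U"
    and YN: "\<forall>p\<in>N. Y p \<in> holonomy X f p"
  shows "L (DY w) = L (Aop hh u w (Y u))"
proof -
  have blL: "bounded_linear L" using L linear_conv_bounded_linear by blast
  have h1: "((\<lambda>p. L (Y p - hh p (Y p))) has_derivative (\<lambda>w. L (DY w - (hh u (DY w) + Aop hh u w (Y u))))) (at u)"
    by (rule bounded_linear.has_derivative[OF blL has_derivative_diff[OF hY Dhh[OF oU lin sm u hY]]])
  have z: "0 = L (Y p - hh p (Y p))" if p: "p \<in> N" for p
  proof -
    have pU: "p \<in> U" using p NU by blast
    obtain v where v: "Y p = hh p v" using YN p img pU by (metis imageE)
    have "hh p (hh p v) = hh p v" using idem pU by (metis comp_apply)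
    then show ?thesis using v L by (simp add: linear_0)
  qed
  have h2: "((\<lambda>p. L (Y p - hh p (Y p))) has_derivative (\<lambda>w. 0)) (at u)"
    by (rule has_derivative_transform_within_open[OF has_derivative_const oN uN z])
  have e: "L (DY w - (hh u (DY w) + Aop hh u w (Y u))) = 0"
    using fun_cong[OF has_derivative_unique[OF h1 h2], of w] by simp
  have "L (hh u (DY w)) = 0" using L0 img u by blast
  then show ?thesis using e unfolding linear_diff[OF L] linear_add[OF L] by simp
qed


lemma sym_span:
  assumes l1: "\<And>y. linear (\<lambda>x. (\<beta> x y::real))" and l2: "\<And>x. linear (\<lambda>y. \<beta> x y)"
    and G: "\<And>x y. x \<in> G \<Longrightarrow> y \<in> G \<Longrightarrow> \<beta> x y = \<beta> y x"
  shows "x \<in> span G \<Longrightarrow> y \<in> span G \<Longrightarrow> \<beta> x y = \<beta> y x"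
proof -
  assume x: "x \<in> span G" and y: "y \<in> span G"
  have s1: "\<beta> x' y' = \<beta> y' x'" if "x' \<in> span G" "y' \<in> G" for x' y'
    by (rule linear_eq_on_span[OF l1 l2 _ that(1)]) (use G that(2) in blast)
  show ?thesis
    by (rule linear_eq_on_span[OF l2 l1 _ y]) (use s1 x in blast)
qed

lemma linA_v: "linear (Aop hh u w)"
  by (rule linearI) (simp_all add: Aop_def inner_add_left scaleR_add_left sum.distrib scaleR_sum_right)

lemma linA_w:
  assumes "\<And>b. linear (frechet_derivative (\<lambda>p. hh p b) (at u))"
  shows "linear (\<lambda>w. Aop hh u w v)"
  by (rule linearI) (simp_all add: Aop_def linear_add[OF assms] linear_scale[OF assms] scaleR_add_right sum.distrib scaleR_sum_right mult.commute)

lemma bl_liou: "bounded_linear (liouville :: 'n tp \<Rightarrow> ('n::finite) tp)"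
  unfolding liouville_def[abs_def] by (intro bounded_linear_Pair bounded_linear_zero bounded_linear_snd)

lemma sm_id: "sm n S (\<lambda>x. x)"
proof (cases n)
  case 0 then show ?thesis by (simp add: sm_0)
next
  case (Suc m)
  have e: "pd b (\<lambda>x. x) = (\<lambda>x. b)" for b unfolding pd_def by simp
  show ?thesis unfolding Suc sm_Suc e by (intro conjI ballI sm_const) (simp add: sm_0)
qed

theorem mainTheorem4:
  fixes X :: "(real^'n::finite) set"
    and f :: "'n tp \<Rightarrow> real^'n"
    and U :: "'n tp set"
    and hh :: "'n tp \<Rightarrow> 'n tp \<Rightarrow> 'n tp"
  assumes spray: "is_spray X f"
    and U_open: "open U" and U_sub: "U \<subseteq> slit_TM X"
    and C_notin: "\<forall>u\<in>U. liouville u \<notin> holonomy X f u"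
    and const_rank: "\<exists>r. \<forall>u\<in>U. dim (holonomy X f u) = r"
    and hh_lin: "\<forall>u\<in>U. linear (hh u)"
    and hh_smooth: "\<forall>v. smooth_on U (\<lambda>u. hh u v)"
    and hh_idem: "\<forall>u\<in>U. hh u \<circ> hh u = hh u"
    and hh_image: "\<forall>u\<in>U. range (hh u) = holonomy X f u"
    and u_in: "u \<in> U"
    and E1: "first_order_sol U hh u E"
  shows "\<exists>E2. second_order_sol U hh u E2 \<and> E2 u = E u \<and>
              frechet_derivative E2 (at u) = frechet_derivative E (at u)"
proof -
  note sp = spray
  note oU = U_open
  have smE: "smooth_on U E" and LC1: "LC_minus_2 E u = 0" and Ph1: "\<forall>v. P_h hh E v u = 0"
    using E1 unfolding first_order_sol_def by auto
  have dE: "E differentiable_on U" using smE sm_0 unfolding smooth_on_sm by blast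
  define L where "L = frechet_derivative E (at u)"
  have hE: "(E has_derivative L) (at u)" unfolding L_def by (rule has_fd[OF dE oU u_in])
  have linL: "linear L" by (rule has_derivative_linear[OF hE])
  have blL: "bounded_linear L" by (rule has_derivative_bounded_linear[OF hE])
  define Hu where "Hu = holonomy X f u"
  define Cu where "Cu = liouville u"
  have hhu: "linear (hh u)" using hh_lin u_in by blast
  have rng: "range (hh u) = Hu" using hh_image u_in unfolding Hu_def by blast
  have L0: "\<forall>h\<in>Hu. L h = 0"
  proof
    fix h assume "h \<in> Hu"
    then obtain v where "h = hh u v" using rng by blast
    then show "L h = 0" using Ph1[rule_format, of v] unfolding P_h_def L_def by simp
  qed
  have LCu: "L Cu = 2 * E u" using LC1 unfolding LC_minus_2_def L_def Cu_def by simp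
  define A where "A = Aop hh u"
  have linDb: "\<And>b. linear (frechet_derivative (\<lambda>p. hh p b) (at u))"
    by (rule has_derivative_linear[OF hh_hasd[OF oU hh_smooth u_in]])
  have linAv: "\<And>w. linear (A w)" unfolding A_def by (rule linA_v)
  have linAw: "\<And>v. linear (\<lambda>w. A w v)" unfolding A_def by (rule linA_w[OF linDb])
  have hYv: "((\<lambda>p. hh p v) has_derivative (\<lambda>w. A w v)) (at u)" for v
  proof -
    have "((\<lambda>p. hh p v) has_derivative (\<lambda>w. hh u 0 + Aop hh u w v)) (at u)"
      using Dhh[OF oU hh_lin hh_smooth u_in has_derivative_const[of v]] by simp
    then show ?thesis unfolding A_def using linear_0[OF hhu] by simp
  qed
  have K0: "L (A w v) = L (A w (hh u v))" for w v
  proof -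
    have "L (A w v) = L (Aop hh u w (hh u v))"
      by (rule star[OF oU hh_lin hh_smooth hh_idem hh_image u_in linL L0[unfolded Hu_def] hYv oU u_in order_refl])
         (use hh_image in blast)
    then show ?thesis unfolding A_def .
  qed
  define G where "G = {Z u | V Z. (V, Z) \<in> hol_fields X f \<and> u \<in> V}"
  have HuG: "Hu = span G" unfolding Hu_def holonomy_def G_def by simp
  have starZ: "L (frechet_derivative Z (at u) w) = L (A w (Z u))"
    if hol: "(V, Z) \<in> hol_fields X f" and uV: "u \<in> V" for V Z w
  proof -
    have oV: "open V" and dZ: "Z differentiable_on V"
      using hol_smooth[OF sp hol] sm_0 unfolding smooth_on_sm by blast+
    show ?thesis unfolding A_def
      by (rule star[OF oU hh_lin hh_smooth hh_idem hh_image u_in linL L0[unfolded Hu_def]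
            has_fd[OF dZ oV uV] open_Int[OF oV oU]])
         (use uV u_in hol_in[OF hol] in auto)
  qed
  have K1: "L (A x y) = L (A y x)" if "x \<in> Hu" "y \<in> Hu" for x y
  proof (rule sym_span[of "\<lambda>x y. L (A x y)" G])
    show "linear (\<lambda>x. L (A x y))" for y using linear_compose[OF linAw linL] by (simp add: o_def)
    show "linear (\<lambda>y. L (A x y))" for x using linear_compose[OF linAv linL] by (simp add: o_def)
    show "x \<in> span G" "y \<in> span G" using that HuG by auto
  next
    fix x y assume "x \<in> G" "y \<in> G"
    then obtain V Z V' Z' where hZ: "(V, Z) \<in> hol_fields X f" "u \<in> V" "x = Z u"
      and hZ': "(V', Z') \<in> hol_fields X f" "u \<in> V'" "y = Z' u" unfolding G_def by blast
    have "lie_bracket Z Z' u \<in> Hu"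
      unfolding Hu_def by (rule hol_in[OF hol_fields.bracket[OF hZ(1) hZ'(1)]]) (use hZ hZ' in blast)
    then have "L (lie_bracket Z Z' u) = 0" using L0 by blast
    then have "L (frechet_derivative Z' (at u) (Z u)) = L (frechet_derivative Z (at u) (Z' u))"
      unfolding lie_bracket_def linear_diff[OF linL] by simp
    then show "L (A x y) = L (A y x)" using starZ[OF hZ(1,2)] starZ[OF hZ'(1,2)] hZ(3) hZ'(3) by simp
  qed
  have K2: "L (A Cu h) = L (0, snd h)" if "h \<in> Hu" for h
  proof (rule linear_eq_on_span[of "\<lambda>h. L (A Cu h)" "\<lambda>h::'n tp. L (0, snd h)" G])
    show "linear (\<lambda>h. L (A Cu h))" using linear_compose[OF linAv linL] by (simp add: o_def)
    show "linear (\<lambda>h::'n tp. L (0, snd h))" using linear_compose[OF bounded_linear.linear[OF bl_liou] linL]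
      by (simp add: o_def liouville_def)
    show "h \<in> span G" using that HuG by auto
  next
    fix x assume "x \<in> G"
    then obtain V Z where hZ: "(V, Z) \<in> hol_fields X f" "u \<in> V" "x = Z u" unfolding G_def by blast
    show "L (A Cu x) = L (0, snd x)"
      using C_cond[OF sp hZ(1,2) linL L0[unfolded Hu_def]] starZ[OF hZ(1,2)] hZ(3) unfolding Cu_def by simp
  qed
  obtain y z where yz: "y \<in> span Hu" "\<And>w. w \<in> span Hu \<Longrightarrow> orthogonal z w" "Cu = y + z"
    using orthogonal_subspace_decomp_exists[of Hu Cu] by metis
  have spHu: "span Hu = Hu" unfolding HuG by (rule span_span)
  have CnH: "Cu \<notin> Hu" using C_notin u_in unfolding Cu_def Hu_def by blast
  have z0: "z \<noteq> 0" using yz CnH spHu by auto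
  have zz: "z \<bullet> z \<noteq> 0" using z0 by simp
  define \<mu> where "\<mu> k = (k \<bullet> z) / (z \<bullet> z)" for k
  have lin\<mu>: "linear \<mu>" unfolding \<mu>_def
    by (rule linearI) (simp_all add: inner_add_left add_divide_distrib)
  have \<mu>H: "\<mu> h = 0" if "h \<in> Hu" for h
    using yz(2)[of h] that spHu unfolding \<mu>_def orthogonal_def by (simp add: inner_commute)
  have \<mu>C: "\<mu> Cu = 1"
  proof -
    have "z \<bullet> y = 0" using yz(2)[of y] yz(1) unfolding orthogonal_def by simp
    then have yz0: "y \<bullet> z = 0" by (simp only: inner_commute)
    have "Cu \<bullet> z = y \<bullet> z + z \<bullet> z" unfolding yz(3) by (rule inner_add_left)
    then have "Cu \<bullet> z = z \<bullet> z" using yz0 by simp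
    then show ?thesis unfolding \<mu>_def using zz by simp
  qed
  define P where "P = hh u"
  have PinH: "P v \<in> Hu" for v using rng unfolding P_def by blast
  have PH: "P h = h" if hH: "h \<in> Hu" for h
  proof -
    obtain v where "h = hh u v" using hH rng by blast
    then show ?thesis unfolding P_def using hh_idem u_in by (metis comp_apply)
  qed
  have linP: "linear P" unfolding P_def by (rule hhu)
  define \<gamma> where "\<gamma> w = 2 * L w - L (0, snd w)" for w :: "'n tp"
  have linLl: "linear (\<lambda>w::'n tp. L (0, snd w))"
    using linear_compose[OF bounded_linear.linear[OF bl_liou] linL] by (simp add: o_def liouville_def)
  have lin\<gamma>: "linear \<gamma>"
  proof (rule linearI)
    fix x y show "\<gamma> (x + y) = \<gamma> x + \<gamma> y"
      unfolding \<gamma>_def using linear_add[OF linL, of x y] linear_add[OF linLl, of x y] by simp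
  next
    fix c :: real and x show "\<gamma> (c *\<^sub>R x) = c *\<^sub>R \<gamma> x"
      unfolding \<gamma>_def using linear_scale[OF linL, of c x] linear_scale[OF linLl, of c x] by (simp add: algebra_simps)
  qed
  have \<gamma>C: "\<gamma> Cu = L Cu" unfolding \<gamma>_def Cu_def liouville_def by simp
  have \<gamma>H: "\<gamma> h = - L (0, snd h)" if "h \<in> Hu" for h unfolding \<gamma>_def using L0 that by simp
  define B where "B w k = \<mu> k * \<gamma> w - L (A w (k - \<mu> k *\<^sub>R Cu))" for w k
  define \<pi> where "\<pi> w = \<mu> w *\<^sub>R Cu + P (w - \<mu> w *\<^sub>R Cu)" for w
  define Q where "Q w1 w2 = B w1 w2 + B w2 w1 - B (\<pi> w1) (\<pi> w2)" for w1 w2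
  define W where "W = {k. \<exists>t. k - t *\<^sub>R Cu \<in> Hu}"
  have \<mu>form: "\<mu> (t *\<^sub>R Cu + h) = t" if "h \<in> Hu" for t h
    using that by (simp add: linear_add[OF lin\<mu>] linear_scale[OF lin\<mu>] \<mu>C \<mu>H)
  have Bform: "B (t1 *\<^sub>R Cu + h1) (t2 *\<^sub>R Cu + h2) = t2 * (t1 * L Cu - L (0, snd h1)) - (t1 * L (0, snd h2) + L (A h1 h2))"
    if h1: "h1 \<in> Hu" and h2: "h2 \<in> Hu" for t1 t2 h1 h2
  proof -
    have g: "\<gamma> (t1 *\<^sub>R Cu + h1) = t1 * L Cu - L (0, snd h1)"
      using h1 by (simp add: linear_add[OF lin\<gamma>] linear_scale[OF lin\<gamma>] \<gamma>C \<gamma>H)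
    have a: "A (t1 *\<^sub>R Cu + h1) h2 = t1 *\<^sub>R A Cu h2 + A h1 h2"
      using linear_add[OF linAw, of "t1 *\<^sub>R Cu" h1 h2] linear_scale[OF linAw, of t1 Cu h2] by simp
    have l: "L (A (t1 *\<^sub>R Cu + h1) h2) = t1 * L (0, snd h2) + L (A h1 h2)"
      unfolding a linear_add[OF linL] linear_scale[OF linL] using K2[OF h2] by simp
    show ?thesis unfolding B_def \<mu>form[OF h2] g using l by simp
  qed
  have Wdest: "\<exists>t h. h \<in> Hu \<and> k = t *\<^sub>R Cu + h" if kW: "k \<in> W" for k
  proof -
    obtain t where "k - t *\<^sub>R Cu \<in> Hu" using kW unfolding W_def by blast
    then show ?thesis by (intro exI[of _ t] exI[of _ "k - t *\<^sub>R Cu"]) simp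
  qed
  have Bsym: "B k1 k2 = B k2 k1" if k1W: "k1 \<in> W" and k2W: "k2 \<in> W" for k1 k2
  proof -
    obtain t1 h1 where 1: "h1 \<in> Hu" "k1 = t1 *\<^sub>R Cu + h1" using Wdest[OF k1W] by blast
    obtain t2 h2 where 2: "h2 \<in> Hu" "k2 = t2 *\<^sub>R Cu + h2" using Wdest[OF k2W] by blast
    show ?thesis unfolding 1(2) 2(2) Bform[OF 1(1) 2(1)] Bform[OF 2(1) 1(1)] K1[OF 1(1) 2(1)]
      by (simp add: algebra_simps)
  qed
  have \<pi>W: "\<pi> w \<in> W" for w unfolding W_def \<pi>_def using PinH by (intro CollectI exI[of _ "\<mu> w"]) simp
  have \<pi>k: "\<pi> k = k" if kW: "k \<in> W" for k
  proof -
    obtain t h where 1: "h \<in> Hu" "k = t *\<^sub>R Cu + h" using Wdest[OF kW] by blast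
    show ?thesis unfolding \<pi>_def 1(2) \<mu>form[OF 1(1)] using PH[OF 1(1)] by simp
  qed
  have B\<pi>: "B x (\<pi> y) = B x y" for x y
  proof -
    have m: "\<mu> (\<pi> y) = \<mu> y" unfolding \<pi>_def
      by (simp add: linear_add[OF lin\<mu>] linear_scale[OF lin\<mu>] \<mu>C \<mu>H[OF PinH])
    have "L (A x (P (y - \<mu> y *\<^sub>R Cu))) = L (A x (y - \<mu> y *\<^sub>R Cu))" unfolding P_def using K0 by simp
    then show ?thesis unfolding B_def m by (simp add: \<pi>_def)
  qed
  have QW1: "Q w k = B w k" if "k \<in> W" for w k
    unfolding Q_def \<pi>k[OF that] using B\<pi>[of k w] Bsym[OF that \<pi>W[of w]] by simp
  have QW2: "Q k w = B w k" if "k \<in> W" for w k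
    unfolding Q_def \<pi>k[OF that] using B\<pi>[of k w] by simp
  have Qsym: "Q x y = Q y x" for x y
    unfolding Q_def using Bsym[OF \<pi>W \<pi>W, of x y] by simp
  have CuW: "Cu \<in> W" unfolding W_def by (intro CollectI exI[of _ 1]) (simp add: HuG span_zero)
  have hhW: "hh u v \<in> W" for v unfolding W_def using rng by (intro CollectI exI[of _ 0]) auto
  have A0: "A w 0 = 0" for w by (rule linear_0[OF linAv])
  have QC: "Q w Cu = \<gamma> w" for w
    unfolding QW1[OF CuW] B_def \<mu>C using A0 linear_0[OF linL] by simp
  have QH: "Q w (hh u v) = - L (A w v)" for w v
  proof -
    have hvH: "hh u v \<in> Hu" using rng by blast
    show ?thesis unfolding QW1[OF hhW] B_def \<mu>H[OF hvH] using K0[of w v] by simp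
  qed
  have lin\<pi>: "linear \<pi>" unfolding \<pi>_def
    by (rule linearI) (simp_all add: linear_add[OF lin\<mu>] linear_scale[OF lin\<mu>] linear_add[OF linP]
        linear_scale[OF linP] linear_diff[OF linP] algebra_simps scaleR_add_left)
  have linB1: "linear (\<lambda>w. B w k)" for k unfolding B_def
    by (rule linearI) (simp_all add: linear_add[OF lin\<gamma>] linear_scale[OF lin\<gamma>] linear_add[OF linAw]
        linear_scale[OF linAw] linear_add[OF linL] linear_scale[OF linL] algebra_simps)
  have linB2: "linear (\<lambda>k. B w k)" for w unfolding B_def
    by (rule linearI) (simp_all add: linear_add[OF lin\<mu>] linear_scale[OF lin\<mu>] linear_add[OF linAv]
        linear_scale[OF linAv] linear_diff[OF linAv] linear_add[OF linL] linear_scale[OF linL]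
        linear_diff[OF linL] algebra_simps scaleR_add_left)
  have bilQ: "bilinear Q" unfolding bilinear_def
  proof (intro allI conjI)
    fix x
    show "linear (Q x)" unfolding Q_def
      by (rule linearI) (simp_all add: linear_add[OF linB1] linear_scale[OF linB1] linear_add[OF linB2]
        linear_scale[OF linB2] linear_add[OF lin\<pi>] linear_scale[OF lin\<pi>] algebra_simps)
  next
    fix y
    show "linear (\<lambda>x. Q x y)" unfolding Q_def
      by (rule linearI) (simp_all add: linear_add[OF linB1] linear_scale[OF linB1] linear_add[OF linB2]
        linear_scale[OF linB2] linear_add[OF lin\<pi>] linear_scale[OF lin\<pi>] algebra_simps)
  qed
  have bbQ: "bounded_bilinear Q" using bilQ bilinear_conv_bounded_bilinear by blast
  have Q0l: "Q 0 w = 0" for w by (rule bilinear_lzero[OF bilQ])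
  have Q0r: "Q w 0 = 0" for w by (rule bilinear_rzero[OF bilQ])
  define E2 where "E2 p = E u + L (p - u) + (1/2) * Q (p - u) (p - u)" for p
  have hd: "((\<lambda>p. p - u) has_derivative (\<lambda>w. w)) (at p)" for p
    using has_derivative_diff[OF has_derivative_ident has_derivative_const[of u]] by simp
  have hE2: "(E2 has_derivative (\<lambda>w. L w + Q (p - u) w)) (at p)" for p
  proof -
    have "(E2 has_derivative (\<lambda>w. 0 + L w + (1/2) * (Q (p - u) w + Q w (p - u)))) (at p)"
      unfolding E2_def[abs_def]
      by (rule has_derivative_add[OF has_derivative_add[OF has_derivative_const bounded_linear.has_derivative[OF blL hd]]
            has_derivative_mult_right[OF bounded_bilinear.FDERIV[OF bbQ hd hd]]])
    then show ?thesis using Qsym by (simp add: algebra_simps)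
  qed
  have fdE2: "frechet_derivative E2 (at p) = (\<lambda>w. L w + Q (p - u) w)" for p
    by (rule frechet_derivative_at[OF hE2, symmetric])
  have E2u: "E2 u = E u" unfolding E2_def using Q0l linear_0[OF linL] by simp
  have fdE2u: "frechet_derivative E2 (at u) = frechet_derivative E (at u)"
    unfolding fdE2 L_def[symmetric] using Q0l by simp
  have smE2: "smooth_on U E2"
    unfolding smooth_on_sm
  proof
    fix n
    have pu: "sm n U (\<lambda>p. p - u)" by (rule sm_diff[OF oU sm_id sm_const])
    have "sm n U (\<lambda>p. (E u + L (p - u)) + (1/2) * Q (p - u) (p - u))"
      by (rule sm_add[OF oU sm_add[OF oU sm_const sm_lin[OF oU blL pu]]
            sm_lin[OF oU bounded_linear_mult_right sm_bil[OF oU bbQ pu pu]]])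
    then show "sm n U E2" unfolding E2_def[abs_def] .
  qed
  have lC: "liouville u = Cu" unfolding Cu_def ..
  have LC2: "LC_minus_2 E2 u = 0"
    unfolding LC_minus_2_def fdE2 E2u lC using Q0l LCu by simp
  have Ph2: "P_h hh E2 v u = 0" for v
  proof -
    have "hh u v \<in> Hu" using rng by blast
    then show ?thesis unfolding P_h_def fdE2 using Q0l L0 by simp
  qed
  have dLC: "frechet_derivative (LC_minus_2 E2) (at u) = (\<lambda>_. 0)"
  proof -
    have eqLC: "LC_minus_2 E2 = (\<lambda>p. L (liouville p) + Q (p - u) (liouville p) - 2 * E2 p)"
      by (rule ext) (simp add: LC_minus_2_def fdE2)
    have hLC: "((\<lambda>p. L (liouville p) + Q (p - u) (liouville p) - 2 * E2 p) has_derivative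
        (\<lambda>w. L (liouville w) + (Q (u - u) (liouville w) + Q w (liouville u)) - 2 * (L w + Q (u - u) w))) (at u)"
      by (rule has_derivative_diff[OF has_derivative_add[OF
            bounded_linear.has_derivative[OF blL bounded_linear_imp_has_derivative[OF bl_liou]]
            bounded_bilinear.FDERIV[OF bbQ hd bounded_linear_imp_has_derivative[OF bl_liou]]]
            has_derivative_mult_right[OF hE2]])
    have "(\<lambda>w. L (liouville w) + (Q (u - u) (liouville w) + Q w (liouville u)) - 2 * (L w + Q (u - u) w)) = (\<lambda>_. 0)"
    proof (rule ext)
      fix w
      show "L (liouville w) + (Q (u - u) (liouville w) + Q w (liouville u)) - 2 * (L w + Q (u - u) w) = 0"
        unfolding lC QC using Q0l by (simp add: \<gamma>_def liouville_def)
    qed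
    then show ?thesis unfolding eqLC using frechet_derivative_at[OF hLC] by simp
  qed
  have dPh: "frechet_derivative (P_h hh E2 v) (at u) = (\<lambda>_. 0)" for v
  proof -
    have eqP: "P_h hh E2 v = (\<lambda>p. L (hh p v) + Q (p - u) (hh p v))"
      by (rule ext) (simp add: P_h_def fdE2)
    have hP: "((\<lambda>p. L (hh p v) + Q (p - u) (hh p v)) has_derivative
        (\<lambda>w. L (A w v) + (Q (u - u) (A w v) + Q w (hh u v)))) (at u)"
      by (rule has_derivative_add[OF bounded_linear.has_derivative[OF blL hYv]
            bounded_bilinear.FDERIV[OF bbQ hd hYv]])
    have "(\<lambda>w. L (A w v) + (Q (u - u) (A w v) + Q w (hh u v))) = (\<lambda>_. 0)"
      using Q0l QH by simp
    then show ?thesis unfolding eqP using frechet_derivative_at[OF hP] by simp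
  qed
  show ?thesis
    by (intro exI[of _ E2] conjI E2u fdE2u)
       (simp add: second_order_sol_def first_order_sol_def smE2 LC2 Ph2 dLC dPh)
qed


end
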